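(* Let $n\ge1$ and $A$ a nonempty finite set. A graph $g\in\mathscr G_n(A)$ lies in the image of $\mu\colon\mathscr M_n(A)\to\mathscr G_n(A)$ if and only if for every directed path $a_0\to a_1\to\dots\to a_k$ in $g$ with $k\ge1$ there exists an index $0\le i<k$ such that all edges $a_p\to a_q$ with $p\le i<q$ have the same weight.
   Context: $\mathscr M_n(A)$: equivalence classes of planar rooted trees with leaf set $A$ and vertices labelled by $1,\dots,n$, modulo: all stumps equivalent; non-root stumps removable; edges between equally labelled vertices contractible; unary vertices removable. $\mathscr G_n(A)$ is the set of acyclic complete directed graphs on $A$ with weights in $\{1,\dots,n\}$ (each two-element subset carries exactly one directed weighted edge, and the directions form a linear order). $\mu(T)$ is the graph with edge $a\to b$ iff $a$ precedes $b$ in the planar order of the leaves of $T$, weighted by the label of the lowest vertex on the path from $a$ to $b$ in $T$. *)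

theory Defs
  imports Main
begin

text \<open>Planar rooted trees: leaves carry elements of the leaf set, internal vertices
carry a label (a natural number); the order of the children list is the planar structure.
A node with empty child list is a stump; unary nodes are allowed.\<close>
datatype 'a ptree = Leaf 'a | Node nat "'a ptree list"

fun leaves :: "'a ptree \<Rightarrow> 'a list" where
  "leaves (Leaf x) = [x]"
| "leaves (Node k ts) = concat (map leaves ts)"

fun labels :: "'a ptree \<Rightarrow> nat set" where
  "labels (Leaf x) = {}"
| "labels (Node k ts) = insert k (\<Union>t\<in>set ts. labels t)"

fun subtrees :: "'a ptree \<Rightarrow> 'a ptree set" where
  "subtrees (Leaf x) = {Leaf x}"
| "subtrees (Node k ts) = insert (Node k ts) (\<Union>t\<in>set ts. subtrees t)"

text \<open>Representatives of elements of M_n(A): planar rooted trees with leaf set A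
(each element exactly once) and vertex labels in {1..n}.\<close>
definition trees :: "nat \<Rightarrow> 'a set \<Rightarrow> 'a ptree set" where
  "trees n A = {T. distinct (leaves T) \<and> set (leaves T) = A \<and> labels T \<subseteq> {1..n}}"

text \<open>Weighted directed graphs on A as sets of edges (a, b, w): edge a -> b of weight w.\<close>
type_synonym 'a wgraph = "('a \<times> 'a \<times> nat) set"

definition dir :: "'a wgraph \<Rightarrow> ('a \<times> 'a) set" where
  "dir g = {(a, b). \<exists>w. (a, b, w) \<in> g}"

definition Gn :: "nat \<Rightarrow> 'a set \<Rightarrow> 'a wgraph set" where
  "Gn n A = {g. (\<forall>(a, b, w) \<in> g. a \<in> A \<and> b \<in> A \<and> a \<noteq> b \<and> w \<in> {1..n})
      \<and> (\<forall>a\<in>A. \<forall>b\<in>A. a \<noteq> b \<longrightarrow> (\<exists>!e. e \<in> g \<and> (fst e, fst (snd e)) \<in> {(a, b), (b, a)}))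
      \<and> acyclic (dir g)}"

definition precedes :: "'a ptree \<Rightarrow> 'a \<Rightarrow> 'a \<Rightarrow> bool" where
  "precedes T a b = (\<exists>i j. i < j \<and> j < length (leaves T) \<and> leaves T ! i = a \<and> leaves T ! j = b)"

text \<open>The lowest vertex on the path from a to b: the vertex whose subtree contains both
leaves while no child subtree contains both; its label is the weight.\<close>
definition mu :: "'a ptree \<Rightarrow> 'a wgraph" where
  "mu T = {(a, b, k). precedes T a b \<and>
     (\<exists>ts. Node k ts \<in> subtrees T \<and> a \<in> set (leaves (Node k ts)) \<and> b \<in> set (leaves (Node k ts))
        \<and> (\<forall>t\<in>set ts. \<not> (a \<in> set (leaves t) \<and> b \<in> set (leaves t))))}"

text \<open>Directed path a_0 -> ... -> a_k in g with k >= 1 (given as the vertex list)\<close>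
definition dpath :: "'a wgraph \<Rightarrow> 'a list \<Rightarrow> bool" where
  "dpath g as = (2 \<le> length as \<and> (\<forall>p. p + 1 < length as \<longrightarrow> (as ! p, as ! (p + 1)) \<in> dir g))"

definition path_condition :: "'a wgraph \<Rightarrow> bool" where
  "path_condition g = (\<forall>as. dpath g as \<longrightarrow>
     (\<exists>i. i + 1 < length as \<and> (\<exists>w. \<forall>p q. p \<le> i \<and> i < q \<and> q < length as \<longrightarrow> (as ! p, as ! q, w) \<in> g)))"

end

theory Submission
  imports Defs
begin

definition prec :: "'a list \<Rightarrow> 'a \<Rightarrow> 'a \<Rightarrow> bool" where
  "prec L a b = (\<exists>i j. i < j \<and> j < length L \<and> L ! i = a \<and> L ! j = b)"

lemma prec_set: "prec L a b \<Longrightarrow> a \<in> set L \<and> b \<in> set L"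
  unfolding prec_def by auto

lemma prec_append: "prec (xs @ ys) a b \<longleftrightarrow> prec xs a b \<or> prec ys a b \<or> (a \<in> set xs \<and> b \<in> set ys)"
proof
  assume "prec (xs @ ys) a b"
  then obtain i j where ij: "i < j" "j < length (xs@ys)" "(xs@ys) ! i = a" "(xs@ys) ! j = b"
    unfolding prec_def by blast
  show "prec xs a b \<or> prec ys a b \<or> (a \<in> set xs \<and> b \<in> set ys)"
  proof (cases "j < length xs")
    case True
    then show ?thesis using ij unfolding prec_def by (auto simp: nth_append)
  next
    case False
    show ?thesis
    proof (cases "i < length xs")
      case True
      then show ?thesis using ij False by (auto simp: nth_append)
    next
      case F2: False
      have "prec ys a b" unfolding prec_def
        apply (rule exI[of _ "i - length xs"], rule exI[of _ "j - length xs"])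
        using ij False F2 by (auto simp: nth_append)
      then show ?thesis by blast
    qed
  qed
next
  assume "prec xs a b \<or> prec ys a b \<or> (a \<in> set xs \<and> b \<in> set ys)"
  then show "prec (xs @ ys) a b"
  proof (elim disjE)
    assume "prec xs a b"
    then obtain i j where ij: "i < j" "j < length xs" "xs ! i = a" "xs ! j = b"
      unfolding prec_def by blast
    show ?thesis unfolding prec_def
      apply (rule exI[of _ "i"], rule exI[of _ "j"])
      using ij by (auto simp: nth_append)
  next
    assume "prec ys a b"
    then obtain i j where ij: "i < j" "j < length ys" "ys ! i = a" "ys ! j = b"
      unfolding prec_def by blast
    show ?thesis unfolding prec_def
      apply (rule exI[of _ "i + length xs"], rule exI[of _ "j + length xs"])
      using ij by (auto simp: nth_append)
  next
    assume "a \<in> set xs \<and> b \<in> set ys"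
    then obtain i j where ij: "i < length xs" "xs ! i = a" "j < length ys" "ys ! j = b"
      by (auto simp: in_set_conv_nth)
    show ?thesis unfolding prec_def
      apply (rule exI[of _ "i"], rule exI[of _ "j + length xs"])
      using ij by (auto simp: nth_append)
  qed
qed

lemma set_concat_nth: "a \<in> set (concat xss) \<longleftrightarrow> (\<exists>j < length xss. a \<in> set (xss ! j))"
  by (metis in_set_conv_nth set_concat UN_iff)

lemma prec_concat: "prec (concat xss) a b \<longleftrightarrow> (\<exists>j < length xss. prec (xss ! j) a b)
   \<or> (\<exists>x y. x < y \<and> y < length xss \<and> a \<in> set (xss ! x) \<and> b \<in> set (xss ! y))"
proof (induction xss)
  case Nil
  then show ?case by (simp add: prec_def)
next
  case (Cons xs xss)
  have "prec (concat (xs # xss)) a b \<longleftrightarrow> prec xs a b \<or> prec (concat xss) a b \<or> (a \<in> set xs \<and> b \<in> set (concat xss))"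
    by (simp add: prec_append)
  also have "\<dots> \<longleftrightarrow> (\<exists>j < length (xs#xss). prec ((xs#xss) ! j) a b)
   \<or> (\<exists>x y. x < y \<and> y < length (xs#xss) \<and> a \<in> set ((xs#xss) ! x) \<and> b \<in> set ((xs#xss) ! y))"
  proof (rule iffI)
    assume "prec xs a b \<or> prec (concat xss) a b \<or> (a \<in> set xs \<and> b \<in> set (concat xss))"
    then show "(\<exists>j < length (xs#xss). prec ((xs#xss) ! j) a b)
   \<or> (\<exists>x y. x < y \<and> y < length (xs#xss) \<and> a \<in> set ((xs#xss) ! x) \<and> b \<in> set ((xs#xss) ! y))"
    proof (elim disjE conjE)
      assume "prec xs a b" then show ?thesis by (intro disjI1 exI[of _ 0]) simp
    next
      assume "prec (concat xss) a b"
      then have "(\<exists>j < length xss. prec (xss ! j) a b)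
        \<or> (\<exists>x y. x < y \<and> y < length xss \<and> a \<in> set (xss ! x) \<and> b \<in> set (xss ! y))"
        using Cons.IH by blast
      then show ?thesis
      proof (elim disjE exE conjE)
        fix j assume "j < length xss" "prec (xss ! j) a b"
        then show ?thesis by (intro disjI1 exI[of _ "Suc j"]) auto
      next
        fix x y assume "x < y" "y < length xss" "a \<in> set (xss ! x)" "b \<in> set (xss ! y)"
        then show ?thesis by (intro disjI2 exI[of _ "Suc x"] exI[of _ "Suc y"]) auto
      qed
    next
      assume "a \<in> set xs" "b \<in> set (concat xss)"
      then obtain j where "j < length xss" "b \<in> set (xss ! j)" using set_concat_nth by metis
      then show ?thesis using \<open>a \<in> set xs\<close> by (intro disjI2 exI[of _ "0"] exI[of _ "Suc j"]) auto
    qed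
  next
    assume "(\<exists>j < length (xs#xss). prec ((xs#xss) ! j) a b)
   \<or> (\<exists>x y. x < y \<and> y < length (xs#xss) \<and> a \<in> set ((xs#xss) ! x) \<and> b \<in> set ((xs#xss) ! y))"
    then show "prec xs a b \<or> prec (concat xss) a b \<or> (a \<in> set xs \<and> b \<in> set (concat xss))"
    proof (elim disjE exE conjE)
      fix j assume "j < length (xs#xss)" "prec ((xs#xss) ! j) a b"
      then show ?thesis
        using Cons.IH by (cases j) auto
    next
      fix x y assume "x < y" "y < length (xs#xss)" "a \<in> set ((xs#xss) ! x)" "b \<in> set ((xs#xss) ! y)"
      then show ?thesis
      proof (cases x)
        case 0
        then obtain y' where "y = Suc y'" using \<open>x < y\<close> by (cases y) auto
        then show ?thesis using 0 \<open>y < length (xs#xss)\<close> \<open>a \<in> set ((xs#xss) ! x)\<close> \<open>b \<in> set ((xs#xss) ! y)\<close>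
          using set_concat_nth by auto
      next
        case (Suc x')
        then obtain y' where "y = Suc y'" using \<open>x < y\<close> by (cases y) auto
        then show ?thesis using Suc \<open>x < y\<close> \<open>y < length (xs#xss)\<close> \<open>a \<in> set ((xs#xss) ! x)\<close> \<open>b \<in> set ((xs#xss) ! y)\<close>
          using Cons.IH by auto
      qed
    qed
  qed
  finally show ?case .
qed

lemma concat_disj: "distinct (concat xss) \<Longrightarrow> x < length xss \<Longrightarrow> y < length xss
  \<Longrightarrow> a \<in> set (xss ! x) \<Longrightarrow> a \<in> set (xss ! y) \<Longrightarrow> x = y"
proof (induction xss arbitrary: x y)
  case Nil then show ?case by simp
next
  case (Cons xs xss)
  have d: "set xs \<inter> set (concat xss) = {}" "distinct (concat xss)" using Cons.prems(1) by auto
  show ?case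
  proof (cases x)
    case 0
    show ?thesis
    proof (cases y)
      case (Suc y')
      then have "a \<in> set (concat xss)" using Cons.prems set_concat_nth by (metis Suc_less_eq length_Cons nth_Cons_Suc)
      moreover have "a \<in> set xs" using Cons.prems 0 by simp
      ultimately show ?thesis using d by blast
    qed (simp add: 0)
  next
    case (Suc x')
    show ?thesis
    proof (cases y)
      case 0
      then have "a \<in> set (concat xss)" using Cons.prems Suc set_concat_nth by (metis Suc_less_eq length_Cons nth_Cons_Suc)
      moreover have "a \<in> set xs" using Cons.prems 0 by simp
      ultimately show ?thesis using d by blast
    next
      case (Suc y')
      then show ?thesis using Cons.IH[OF d(2), of x' y'] Cons.prems \<open>x = Suc x'\<close> by simp
    qed
  qed
qed

lemma concat_dist: "distinct (concat xss) \<Longrightarrow> x < length xss \<Longrightarrow> distinct (xss ! x)"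
proof (induction xss arbitrary: x)
  case (Cons xs xss)
  then show ?case by (cases x) auto
qed simp

lemma subtrees_leaves: "N \<in> subtrees t \<Longrightarrow> set (leaves N) \<subseteq> set (leaves t)"
  by (induction t rule: subtrees.induct) auto

lemma self_subtrees: "t \<in> subtrees t"
  by (cases t) auto

lemma mu_iff: "(a,b,v) \<in> mu T \<longleftrightarrow> precedes T a b \<and>
     (\<exists>ts. Node v ts \<in> subtrees T \<and> a \<in> set (leaves (Node v ts)) \<and> b \<in> set (leaves (Node v ts))
        \<and> (\<forall>t\<in>set ts. \<not> (a \<in> set (leaves t) \<and> b \<in> set (leaves t))))"
  by (simp add: mu_def)

lemma precedes_prec: "precedes T a b = prec (leaves T) a b"
  by (simp add: precedes_def prec_def)

lemma mu_endpoints: "(a,b,v) \<in> mu T \<Longrightarrow> a \<in> set (leaves T) \<and> b \<in> set (leaves T)"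
  unfolding mu_iff precedes_prec using prec_set by metis

lemma leaves_Node_nth: "a \<in> set (leaves (Node k ts)) \<longleftrightarrow> (\<exists>j<length ts. a \<in> set (leaves (ts ! j)))"
  using set_concat_nth[of a "map leaves ts"] by (simp cong: conj_cong)

lemma cd: "distinct (leaves (Node k ts)) \<Longrightarrow> x < length ts \<Longrightarrow> y < length ts
  \<Longrightarrow> a \<in> set (leaves (ts ! x)) \<Longrightarrow> a \<in> set (leaves (ts ! y)) \<Longrightarrow> x = y"
  using concat_disj[of "map leaves ts" x y a] by simp

lemma prec_Node: "precedes (Node k ts) a b \<longleftrightarrow> (\<exists>j < length ts. precedes (ts ! j) a b)
   \<or> (\<exists>x y. x < y \<and> y < length ts \<and> a \<in> set (leaves (ts ! x)) \<and> b \<in> set (leaves (ts ! y)))"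
  using prec_concat[of "map leaves ts" a b] by (simp add: precedes_prec cong: conj_cong)

lemma mu_Node_cases:
  assumes d: "distinct (leaves (Node k ts))" and e: "(a,b,v) \<in> mu (Node k ts)"
  shows "(\<exists>j<length ts. (a,b,v) \<in> mu (ts!j)) \<or>
    (v = k \<and> (\<exists>x y. x<y \<and> y<length ts \<and> a \<in> set (leaves (ts!x)) \<and> b \<in> set (leaves (ts!y))))"
proof -
  from e[unfolded mu_iff] obtain ts' where pr: "precedes (Node k ts) a b" and N: "Node v ts' \<in> subtrees (Node k ts)"
    and ab: "a \<in> set (leaves (Node v ts'))" "b \<in> set (leaves (Node v ts'))"
    and nc: "\<forall>t\<in>set ts'. \<not> (a \<in> set (leaves t) \<and> b \<in> set (leaves t))"
    by blast
  have PC: "(\<exists>j < length ts. precedes (ts ! j) a b)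
   \<or> (\<exists>x y. x < y \<and> y < length ts \<and> a \<in> set (leaves (ts ! x)) \<and> b \<in> set (leaves (ts ! y)))"
    using prec_Node[THEN iffD1, OF pr] .
  show ?thesis
  proof (cases "Node v ts' = Node k ts")
    case True
    then have vk: "v = k" "ts' = ts" by auto
    show ?thesis using PC
    proof (elim disjE exE conjE)
      fix j assume "j < length ts" "precedes (ts ! j) a b"
      then have "ts ! j \<in> set ts" "a \<in> set (leaves (ts!j)) \<and> b \<in> set (leaves (ts!j))"
        using prec_set[of "leaves (ts!j)" a b] precedes_prec[of "ts!j" a b] by auto
      then show ?thesis using nc vk by blast
    next
      fix x y assume "x < y" "y < length ts" "a \<in> set (leaves (ts ! x))" "b \<in> set (leaves (ts ! y))"
      then show ?thesis using vk by blast
    qed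
  next
    case False
    then obtain t where t: "t \<in> set ts" "Node v ts' \<in> subtrees t" using N by auto
    then obtain j where j: "j < length ts" "t = ts ! j" by (metis in_set_conv_nth)
    have abt: "a \<in> set (leaves t)" "b \<in> set (leaves t)" using subtrees_leaves[OF t(2)] ab by auto
    show ?thesis using PC
    proof (elim disjE exE conjE)
      fix j' assume j': "j' < length ts" "precedes (ts ! j') a b"
      then have "a \<in> set (leaves (ts!j'))" using prec_set[of "leaves (ts!j')" a b] precedes_prec[of "ts!j'" a b] by simp
      then have "j' = j" using cd[OF d j'(1) j(1)] abt j by simp
      then have "(a,b,v) \<in> mu (ts ! j)" unfolding mu_iff using j' t j ab nc by blast
      then show ?thesis using j by blast
    next
      fix x y assume xy: "x < y" "y < length ts" "a \<in> set (leaves (ts ! x))" "b \<in> set (leaves (ts ! y))"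
      have "x = j" using cd[OF d _ j(1) xy(3)] xy abt j by simp
      moreover have "y = j" using cd[OF d xy(2) j(1) xy(4)] abt j by simp
      ultimately show ?thesis using xy by simp
    qed
  qed
qed

lemma mu_child: "t \<in> set ts \<Longrightarrow> mu t \<subseteq> mu (Node k ts)"
proof
  fix e assume t: "t \<in> set ts" and e: "e \<in> mu t"
  obtain a b v where ev: "e = (a,b,v)" by (cases e) auto
  obtain j where j: "j < length ts" "t = ts ! j" using t by (metis in_set_conv_nth)
  from e[unfolded ev mu_iff] obtain ts' where pr: "precedes t a b" and N: "Node v ts' \<in> subtrees t"
    and ab: "a \<in> set (leaves (Node v ts'))" "b \<in> set (leaves (Node v ts'))"
    and nc: "\<forall>t\<in>set ts'. \<not> (a \<in> set (leaves t) \<and> b \<in> set (leaves t))"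
    by blast
  have "precedes (Node k ts) a b" using pr j by (intro prec_Node[THEN iffD2] disjI1) blast
  moreover have "Node v ts' \<in> subtrees (Node k ts)" using N t by auto
  ultimately show "e \<in> mu (Node k ts)" unfolding ev mu_iff using ab nc by blast
qed

lemma mu_cross:
  assumes d: "distinct (leaves (Node k ts))" and xy: "x < y" "y < length ts"
    "a \<in> set (leaves (ts ! x))" "b \<in> set (leaves (ts ! y))"
  shows "(a,b,k) \<in> mu (Node k ts)"
proof -
  have "precedes (Node k ts) a b" using xy by (intro prec_Node[THEN iffD2] disjI2) blast
  moreover have "Node k ts \<in> subtrees (Node k ts)" by simp
  moreover have "a \<in> set (leaves (Node k ts))" "b \<in> set (leaves (Node k ts))"
    using leaves_Node_nth xy by (meson order.strict_trans)+
  moreover have "\<forall>t\<in>set ts. \<not> (a \<in> set (leaves t) \<and> b \<in> set (leaves t))"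
  proof (intro ballI notI)
    fix t assume "t \<in> set ts" "a \<in> set (leaves t) \<and> b \<in> set (leaves t)"
    then obtain z where z: "z < length ts" "t = ts ! z" "a \<in> set (leaves (ts!z))" "b \<in> set (leaves (ts!z))"
      by (metis in_set_conv_nth)
    have "z = x" using cd[OF d z(1) _ z(3) xy(3)] xy by simp
    moreover have "z = y" using cd[OF d z(1) xy(2) z(4) xy(4)] by simp
    ultimately show False using xy by simp
  qed
  ultimately show ?thesis unfolding mu_iff by blast
qed

lemma pc_mu: "distinct (leaves T) \<Longrightarrow> path_condition (mu T)"
proof (induction T)
  case (Leaf x)
  have "mu (Leaf x) = {}"
  proof (rule ccontr)
    assume "mu (Leaf x) \<noteq> {}"
    then obtain a b v where "(a,b,v) \<in> mu (Leaf x)" by auto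
    then have "prec [x] a b" unfolding mu_iff precedes_prec by simp
    then show False unfolding prec_def by auto
  qed
  show ?case unfolding path_condition_def
  proof (intro allI impI)
    fix as assume "dpath (mu (Leaf x)) as"
    then have "(as!0, as!(0+1)) \<in> dir (mu (Leaf x))" unfolding dpath_def by auto
    then show "\<exists>i. i + 1 < length as \<and> (\<exists>w. \<forall>p q. p \<le> i \<and> i < q \<and> q < length as \<longrightarrow> (as ! p, as ! q, w) \<in> mu (Leaf x))"
      using \<open>mu (Leaf x) = {}\<close> unfolding dir_def by simp
  qed
next
  case (Node k ts)
  let ?T = "Node k ts"
  have d: "distinct (leaves ?T)" by fact
  show ?case unfolding path_condition_def
  proof (intro allI impI)
    fix as assume dp: "dpath (mu ?T) as"
    have len: "2 \<le> length as" using dp dpath_def by blast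
    have ed: "\<And>p. p+1 < length as \<Longrightarrow> (as!p, as!(p+1)) \<in> dir (mu ?T)" using dp dpath_def by blast
    have inL: "as!p \<in> set (leaves ?T)" if p: "p < length as" for p
    proof (cases "p+1 < length as")
      case True
      then obtain v where "(as!p, as!(p+1), v) \<in> mu ?T" using ed unfolding dir_def by blast
      then show ?thesis using mu_endpoints by metis
    next
      case False
      then have "(p-1)+1 < length as" "(p - 1) + 1 = p" using p len by auto
      then obtain v where "(as!(p-1), as!p, v) \<in> mu ?T" using ed[of "p-1"] unfolding dir_def by auto
      then show ?thesis using mu_endpoints by metis
    qed
    define c where "c p = (SOME j. j < length ts \<and> as!p \<in> set (leaves (ts!j)))" for p
    have cP: "c p < length ts \<and> as!p \<in> set (leaves (ts!(c p)))" if "p < length as" for p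
    proof -
      have "\<exists>j. j < length ts \<and> as!p \<in> set (leaves (ts!j))" using inL[OF that] leaves_Node_nth by metis
      then show ?thesis unfolding c_def by (rule someI_ex)
    qed
    have cu: "c p = j" if "p < length as" "j < length ts" "as!p \<in> set (leaves (ts!j))" for p j
      using cd[OF d _ that(2) _ that(3)] cP[OF that(1)] by blast
    have step: "c p < c (p+1) \<or> (c p = c (p+1) \<and> (as!p, as!(p+1)) \<in> dir (mu (ts!(c p))))"
      if p: "p+1 < length as" for p
    proof -
      obtain v where e: "(as!p, as!(p+1), v) \<in> mu ?T" using ed[OF p] unfolding dir_def by blast
      from mu_Node_cases[OF d e] show ?thesis
      proof (elim disjE exE conjE)
        fix j assume j: "j < length ts" "(as!p, as!(p+1), v) \<in> mu (ts!j)"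
        have "c p = j" "c (p+1) = j" using cu[OF _ j(1)] mu_endpoints[OF j(2)] p by auto
        then show ?thesis using j unfolding dir_def by auto
      next
        fix x y assume xy: "x < y" "y < length ts" "as!p \<in> set (leaves (ts!x))" "as!(p+1) \<in> set (leaves (ts!y))"
        have "c p = x" using cu[OF _ _ xy(3)] xy p by auto
        moreover have "c (p+1) = y" using cu[OF _ xy(2) xy(4)] p by auto
        ultimately show ?thesis using xy by simp
      qed
    qed
    have mono: "q < length as \<Longrightarrow> p \<le> q \<Longrightarrow> c p \<le> c q" for p q
    proof (induction q)
      case 0 then show ?case by simp
    next
      case (Suc q)
      show ?case
      proof (cases "p = Suc q")
        case False
        then have "c p \<le> c q" using Suc by auto
        moreover have "c q \<le> c (q+1)" using step[of q] Suc.prems by fastforce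
        ultimately show ?thesis by simp
      qed simp
    qed
    show "\<exists>i. i+1 < length as \<and> (\<exists>w. \<forall>p q. p \<le> i \<and> i < q \<and> q < length as \<longrightarrow> (as!p, as!q, w) \<in> mu ?T)"
    proof (cases "\<exists>p. p+1 < length as \<and> c p < c (p+1)")
      case True
      define i where "i = (LEAST p. p+1 < length as \<and> c p < c (p+1))"
      have i1: "i+1 < length as" "c i < c (i+1)" using LeastI_ex[OF True] unfolding i_def by auto
      have ieq: "c p = c (p+1)" if "p < i" for p
      proof -
        have "\<not> (p+1 < length as \<and> c p < c (p+1))" using not_less_Least[OF that[unfolded i_def]] .
        moreover have "p+1 < length as" using that i1 by simp
        ultimately show ?thesis using step[of p] by auto
      qed
      have c0: "p \<le> i \<Longrightarrow> c p = c 0" for p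
      proof (induction p)
        case (Suc p)
        then show ?case using ieq[of p] by simp
      qed simp
      show ?thesis
      proof (intro exI conjI allI impI)
        show "i+1 < length as" by fact
        fix p q assume pq: "p \<le> i \<and> i < q \<and> q < length as"
        have "c p = c i" using c0[of p] c0[of i] pq by simp
        moreover have "c (i+1) \<le> c q" using mono[of q "i+1"] pq by simp
        ultimately have "c p < c q" using i1 by simp
        moreover have "p < length as" using pq by simp
        ultimately show "(as!p, as!q, k) \<in> mu ?T"
          using mu_cross[OF d _ _ conjunct2[OF cP] conjunct2[OF cP]] cP pq by blast
      qed
    next
      case False
      then have ceq: "c p = c (p+1) \<and> (as!p, as!(p+1)) \<in> dir (mu (ts!(c p)))" if "p+1 < length as" for p
        using step[OF that] that by auto
      have call: "p < length as \<Longrightarrow> c p = c 0" for p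
      proof (induction p)
        case (Suc p)
        then show ?case using ceq[of p] by simp
      qed simp
      have "0 < length as" using len by linarith
      then have c0l: "c 0 < length ts" using cP[of 0] by blast
      let ?t = "ts ! c 0"
      have tin: "?t \<in> set ts" using c0l by simp
      have dt: "distinct (leaves ?t)" using concat_dist[of "map leaves ts" "c 0"] d c0l by simp
      have "dpath (mu ?t) as" unfolding dpath_def
      proof (intro conjI allI impI)
        show "2 \<le> length as" by fact
        fix p assume p: "p+1 < length as"
        have h1: "(as!p, as!(p+1)) \<in> dir (mu (ts!(c p)))" using ceq[OF p] by blast
        have h2: "c p = c 0" using call[of p] p by simp
        show "(as!p, as!(p+1)) \<in> dir (mu ?t)" using h1 unfolding h2 .
      qed
      then obtain i w where iw: "i+1 < length as" "\<forall>p q. p \<le> i \<and> i < q \<and> q < length as \<longrightarrow> (as!p, as!q, w) \<in> mu ?t"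
        using Node.IH[OF tin dt] unfolding path_condition_def by blast
      then show ?thesis using mu_child[OF tin, of k] by blast
    qed
  qed
qed

lemma mu_Leaf: "mu (Leaf x) = {}"
proof (rule ccontr)
  assume "mu (Leaf x) \<noteq> {}"
  then obtain a b v where "(a,b,v) \<in> mu (Leaf x)" by auto
  then have "prec [x] a b" unfolding mu_iff precedes_prec by simp
  then show False unfolding prec_def by auto
qed

definition rg :: "'a wgraph \<Rightarrow> 'a set \<Rightarrow> 'a wgraph" where
  "rg g B = {e \<in> g. fst e \<in> B \<and> fst (snd e) \<in> B}"

lemma dir_iff: "(a,b) \<in> dir g \<longleftrightarrow> (\<exists>w. (a,b,w) \<in> g)"
  by (simp add: dir_def)

lemma Gn_parts: "g \<in> Gn n A \<Longrightarrow> (\<forall>(a, b, w) \<in> g. a \<in> A \<and> b \<in> A \<and> a \<noteq> b \<and> w \<in> {1..n})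
      \<and> (\<forall>a\<in>A. \<forall>b\<in>A. a \<noteq> b \<longrightarrow> (\<exists>!e. e \<in> g \<and> (fst e, fst (snd e)) \<in> {(a, b), (b, a)}))
      \<and> acyclic (dir g)"
  unfolding Gn_def by (rule CollectD)

lemma Gn_edge: "g \<in> Gn n A \<Longrightarrow> (a,b,w) \<in> g \<Longrightarrow> a \<in> A \<and> b \<in> A \<and> a \<noteq> b \<and> w \<in> {1..n}"
proof -
  assume g: "g \<in> Gn n A" and e: "(a,b,w) \<in> g"
  have "\<forall>(a, b, w) \<in> g. a \<in> A \<and> b \<in> A \<and> a \<noteq> b \<and> w \<in> {1..n}" using Gn_parts[OF g] by (rule conjunct1)
  from bspec[OF this e] show ?thesis by simp
qed

lemma Gn_ex1: "g \<in> Gn n A \<Longrightarrow> a \<in> A \<Longrightarrow> b \<in> A \<Longrightarrow> a \<noteq> b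
   \<Longrightarrow> \<exists>!e. e \<in> g \<and> (fst e, fst (snd e)) \<in> {(a, b), (b, a)}"
proof -
  assume g: "g \<in> Gn n A" and h: "a \<in> A" "b \<in> A" "a \<noteq> b"
  have "\<forall>a\<in>A. \<forall>b\<in>A. a \<noteq> b \<longrightarrow> (\<exists>!e. e \<in> g \<and> (fst e, fst (snd e)) \<in> {(a, b), (b, a)})"
    using Gn_parts[OF g] by (rule conjunct1[OF conjunct2])
  then show ?thesis using h by blast
qed

lemma Gn_acyc: "g \<in> Gn n A \<Longrightarrow> acyclic (dir g)"
  using Gn_parts by (rule conjunct2[OF conjunct2])

lemma Gn_uniq:
  assumes g: "g \<in> Gn n A" and e1: "(a,b,v) \<in> g" and e2: "(a',b',v') \<in> g"
    and ab: "(a',b') \<in> {(a,b),(b,a)}"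
  shows "(a,b,v) = (a',b',v')"
proof -
  have "a \<in> A" "b \<in> A" "a \<noteq> b" using Gn_edge[OF g e1] by auto
  from Gn_ex1[OF g this] have "\<exists>!e. e \<in> g \<and> (fst e, fst (snd e)) \<in> {(a, b), (b, a)}" .
  moreover have "(a,b,v) \<in> g \<and> (fst (a,b,v), fst (snd (a,b,v))) \<in> {(a, b), (b, a)}" using e1 by simp
  moreover have "(a',b',v') \<in> g \<and> (fst (a',b',v'), fst (snd (a',b',v'))) \<in> {(a, b), (b, a)}" using e2 ab by simp
  ultimately show ?thesis by blast
qed

lemma Gn_total: "g \<in> Gn n A \<Longrightarrow> a \<in> A \<Longrightarrow> b \<in> A \<Longrightarrow> a \<noteq> b \<Longrightarrow> (a,b) \<in> dir g \<or> (b,a) \<in> dir g"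
proof -
  assume g: "g \<in> Gn n A" and h: "a \<in> A" "b \<in> A" "a \<noteq> b"
  obtain e where "e \<in> g" "(fst e, fst (snd e)) \<in> {(a, b), (b, a)}" using Gn_ex1[OF g h] by blast
  then show ?thesis unfolding dir_def by (cases e) auto
qed

lemma Gn_trans: assumes g: "g \<in> Gn n A" and ab: "(a,b) \<in> dir g" and bc: "(b,c) \<in> dir g"
  shows "(a,c) \<in> dir g"
proof -
  have ac: "acyclic (dir g)" using Gn_acyc[OF g] .
  have A: "a \<in> A" "b \<in> A" "c \<in> A" using ab bc Gn_edge[OF g] unfolding dir_iff by blast+
  have "a \<noteq> c"
  proof
    assume "a = c"
    then have "(b,a) \<in> dir g" using bc by simp
    then have "(a,a) \<in> (dir g)\<^sup>+" using trancl_into_trancl[OF r_into_trancl[OF ab]] by blast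
    then show False using ac unfolding acyclic_def by blast
  qed
  moreover have "(c,a) \<notin> dir g"
  proof
    assume ca: "(c,a) \<in> dir g"
    have "(a,a) \<in> (dir g)\<^sup>+" using trancl_into_trancl[OF trancl_into_trancl[OF r_into_trancl[OF ab] bc] ca] .
    then show False using ac unfolding acyclic_def by blast
  qed
  ultimately show ?thesis using Gn_total[OF g A(1) A(3)] by blast
qed

lemma Gn_finite_dir: assumes g: "g \<in> Gn n A" and f: "finite A" shows "finite (dir g)"
proof -
  have "dir g \<subseteq> A \<times> A" using Gn_edge[OF g] unfolding dir_def by blast
  then show ?thesis using f finite_subset by blast
qed

lemma sort_ex:
  assumes g: "g \<in> Gn n A" and f: "finite A"
  shows "B \<subseteq> A \<Longrightarrow> \<exists>xs. distinct xs \<and> set xs = B \<and> sorted_wrt (\<lambda>x y. (x,y) \<in> dir g) xs"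
proof (induction "card B" arbitrary: B rule: less_induct)
  case less
  show ?case
  proof (cases "B = {}")
    case True then show ?thesis by (intro exI[of _ "[]"]) simp
  next
    case False
    then obtain b where "b \<in> B" by blast
    have wf: "wf (dir g)" using finite_acyclic_wf Gn_finite_dir[OF g f] Gn_acyc[OF g] by blast
    obtain m where m: "m \<in> B" "\<And>y. (y,m) \<in> dir g \<Longrightarrow> y \<notin> B" using wfE_min[OF wf \<open>b \<in> B\<close>] by blast
    have fB: "finite B" using less.prems f finite_subset by blast
    have "card (B - {m}) < card B" using m(1) fB by (meson card_Diff1_less)
    then obtain xs where xs: "distinct xs" "set xs = B - {m}" "sorted_wrt (\<lambda>x y. (x,y) \<in> dir g) xs"
      using less.hyps[of "B - {m}"] less.prems by blast
    have "\<forall>y\<in>set xs. (m,y) \<in> dir g"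
    proof
      fix y assume "y \<in> set xs"
      then have "y \<in> B" "y \<noteq> m" using xs by auto
      then show "(m,y) \<in> dir g" using Gn_total[OF g, of m y] m less.prems by blast
    qed
    then show ?thesis using xs m(1) by (intro exI[of _ "m # xs"]) auto
  qed
qed

lemma rg_Gn: assumes g: "g \<in> Gn n A" and B: "B \<subseteq> A" shows "rg g B \<in> Gn n B"
  unfolding Gn_def mem_Collect_eq
proof (intro conjI)
  show "\<forall>(a, b, w)\<in>rg g B. a \<in> B \<and> b \<in> B \<and> a \<noteq> b \<and> w \<in> {1..n}"
    using Gn_edge[OF g] unfolding rg_def by auto
next
  show "\<forall>a\<in>B. \<forall>b\<in>B. a \<noteq> b \<longrightarrow> (\<exists>!e. e \<in> rg g B \<and> (fst e, fst (snd e)) \<in> {(a, b), (b, a)})"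
  proof (intro ballI impI)
  fix a b assume ab: "a \<in> B" "b \<in> B" "a \<noteq> b"
  have abA: "a \<in> A" "b \<in> A" using ab B by auto
  obtain e where e0: "e \<in> g \<and> (fst e, fst (snd e)) \<in> {(a, b), (b, a)}"
    and u0: "\<forall>e'. e' \<in> g \<and> (fst e', fst (snd e')) \<in> {(a, b), (b, a)} \<longrightarrow> e' = e"
    using Gn_ex1[OF g abA ab(3)] by (rule ex1E)
  have e: "e \<in> g" "(fst e, fst (snd e)) \<in> {(a, b), (b, a)}" using e0 by auto
  have u: "\<And>e'. e' \<in> g \<and> (fst e', fst (snd e')) \<in> {(a, b), (b, a)} \<Longrightarrow> e' = e"
    using u0 by blast
  have "e \<in> rg g B" using e ab unfolding rg_def by auto
  show "\<exists>!e. e \<in> rg g B \<and> (fst e, fst (snd e)) \<in> {(a, b), (b, a)}"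
  proof (rule ex1I[of _ e])
    show "e \<in> rg g B \<and> (fst e, fst (snd e)) \<in> {(a, b), (b, a)}" using \<open>e \<in> rg g B\<close> e(2) by (rule conjI)
  next
    fix e' assume "e' \<in> rg g B \<and> (fst e', fst (snd e')) \<in> {(a, b), (b, a)}"
    then have "e' \<in> g \<and> (fst e', fst (snd e')) \<in> {(a, b), (b, a)}" unfolding rg_def by simp
    then show "e' = e" by (rule u)
  qed
  qed
next
  have "dir (rg g B) \<subseteq> dir g" unfolding dir_def rg_def by auto
  then show "acyclic (dir (rg g B))" using acyclic_subset Gn_acyc[OF g] by blast
qed

lemma dpath_vertex:
  assumes dp: "dpath g as" and p: "p < length as"
  shows "\<exists>x y w. (x,y,w) \<in> g \<and> (as!p = x \<or> as!p = y)"
proof (cases "p+1 < length as")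
  case True
  then show ?thesis using dp unfolding dpath_def dir_def by blast
next
  case False
  then have h: "(p-1)+1 < length as" "(p - 1) + 1 = p" using p dp unfolding dpath_def by auto
  have "(as!(p-1), as!((p-1)+1)) \<in> dir g" using dp h(1) unfolding dpath_def by blast
  then have "(as!(p-1), as!p) \<in> dir g" unfolding h(2) .
  then obtain w where "(as!(p-1), as!p, w) \<in> g" unfolding dir_iff by blast
  then show ?thesis by blast
qed

lemma rg_pc: assumes pc: "path_condition g" shows "path_condition (rg g B)"
  unfolding path_condition_def
proof (intro allI impI)
  fix as assume dp: "dpath (rg g B) as"
  have "dir (rg g B) \<subseteq> dir g" unfolding dir_def rg_def by auto
  then have "dpath g as" using dp unfolding dpath_def by blast
  then obtain i w where iw: "i+1 < length as" "\<forall>p q. p \<le> i \<and> i < q \<and> q < length as \<longrightarrow> (as!p, as!q, w) \<in> g"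
    using pc unfolding path_condition_def by blast
  have inB: "as!p \<in> B" if "p < length as" for p
    using dpath_vertex[OF dp that] unfolding rg_def by auto
  show "\<exists>i. i + 1 < length as \<and> (\<exists>w. \<forall>p q. p \<le> i \<and> i < q \<and> q < length as \<longrightarrow> (as ! p, as ! q, w) \<in> rg g B)"
    using iw inB unfolding rg_def by (intro exI[of _ i] conjI exI[of _ w]) auto
qed

lemma construct:
  assumes "finite A" "A \<noteq> {}" "g \<in> Gn n A" "path_condition g"
  shows "\<exists>T\<in>trees n A. mu T = g"
  using assms
proof (induction "card A" arbitrary: A g rule: less_induct)
  case less
  have f: "finite A" and ne: "A \<noteq> {}" and g: "g \<in> Gn n A" and pc: "path_condition g" by fact+
  obtain xs where xs: "distinct xs" "set xs = A" "sorted_wrt (\<lambda>x y. (x,y) \<in> dir g) xs"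
    using sort_ex[OF g f, of A] by blast
  have lenA: "length xs = card A" using distinct_card[OF xs(1)] xs(2) by simp
  show ?case
  proof (cases "card A = 1")
    case True
    then obtain a where a: "A = {a}" using card_1_singletonE by blast
    have g0: "g = {}"
    proof (rule ccontr)
      assume "g \<noteq> {}"
      then obtain x y w where xyw: "(x,y,w) \<in> g" by auto
      then show False using Gn_edge[OF g xyw] a by auto
    qed
    have "Leaf a \<in> trees n A" unfolding trees_def using a by simp
    then show ?thesis using g0 mu_Leaf[of a] by (intro bexI[of _ "Leaf a"]) auto
  next
    case False
    have "card A \<noteq> 0" using f ne by simp
    then have len2: "2 \<le> length xs" using False lenA by linarith
    have "dpath g xs" unfolding dpath_def
    proof (intro conjI allI impI)
      show "2 \<le> length xs" by fact
      fix p assume "p+1 < length xs"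
      then show "(xs!p, xs!(p+1)) \<in> dir g" using xs(3) unfolding sorted_wrt_iff_nth_less by simp
    qed
    then obtain i w where i: "i+1 < length xs"
      and iw: "\<And>p q. p \<le> i \<Longrightarrow> i < q \<Longrightarrow> q < length xs \<Longrightarrow> (xs!p, xs!q, w) \<in> g"
      using pc unfolding path_condition_def by blast
    define P where "P = set (take (i+1) xs)"
    define S where "S = set (drop (i+1) xs)"
    have "A = set (take (i+1) xs @ drop (i+1) xs)" using xs(2) by simp
    then have AU: "A = P \<union> S" unfolding P_def S_def set_append .
    have disj: "P \<inter> S = {}" unfolding P_def S_def using set_take_disj_set_drop_if_distinct[OF xs(1)] by blast
    have inP: "xs!p \<in> P" if "p \<le> i" for p unfolding P_def using that i
      by (metis Suc_eq_plus1 in_set_conv_nth le_imp_less_Suc length_take min_less_iff_conj nth_take order_less_trans)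
    have inS: "xs!q \<in> S" if "i < q" "q < length xs" for q
    proof -
      have "drop (i+1) xs ! (q - (i+1)) = xs ! q" using that by simp
      moreover have "q - (i+1) < length (drop (i+1) xs)" using that by simp
      ultimately show ?thesis unfolding S_def by (metis nth_mem)
    qed
    have Pne: "P \<noteq> {}" using inP[of 0] by blast
    have Sne: "S \<noteq> {}" using inS[of "i+1"] i by auto
    have fP: "finite P" "finite S" unfolding P_def S_def by auto
    have PA: "P \<subseteq> A" "S \<subseteq> A" using AU by auto
    have cP: "card P < card A" using f PA Sne disj AU by (metis psubsetI psubset_card_mono Int_absorb1 sup.absorb_iff1 Un_empty)
    have cS: "card S < card A" using f PA Pne disj AU
      by (metis psubsetI psubset_card_mono Int_absorb2 sup.absorb_iff2 Un_empty)
    have cross: "(a,b,w) \<in> g" if hab: "a \<in> P" "b \<in> S" for a b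
    proof -
      obtain p where p: "p < length (take (i+1) xs)" "take (i+1) xs ! p = a"
        using hab(1) unfolding P_def by (metis in_set_conv_nth)
      obtain q where q: "q < length (drop (i+1) xs)" "drop (i+1) xs ! q = b"
        using hab(2) unfolding S_def by (metis in_set_conv_nth)
      have "p \<le> i" "xs!p = a" using p by auto
      moreover have "i < i+1+q" "i+1+q < length xs" "xs!(i+1+q) = b" using q by auto
      ultimately show ?thesis using iw by metis
    qed
    have w1: "w \<in> {1..n}" using Gn_edge[OF g iw[of 0 "i+1"]] i by simp
    obtain TP where TP: "TP \<in> trees n P" "mu TP = rg g P"
      using less.hyps[OF cP fP(1) Pne rg_Gn[OF g PA(1)] rg_pc[OF pc]] by blast
    obtain TS where TS: "TS \<in> trees n S" "mu TS = rg g S"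
      using less.hyps[OF cS fP(2) Sne rg_Gn[OF g PA(2)] rg_pc[OF pc]] by blast
    define T where "T = Node w [TP, TS]"
    have lv: "leaves T = leaves TP @ leaves TS" unfolding T_def by simp
    have sP: "set (leaves TP) = P" "distinct (leaves TP)" "labels TP \<subseteq> {1..n}" using TP(1) unfolding trees_def by auto
    have sS: "set (leaves TS) = S" "distinct (leaves TS)" "labels TS \<subseteq> {1..n}" using TS(1) unfolding trees_def by auto
    have dT: "distinct (leaves T)" using lv sP sS disj by simp
    have Ttr: "T \<in> trees n A" unfolding trees_def using dT lv sP sS AU w1 by (simp add: T_def)
    have "mu T = g"
    proof
      show "mu T \<subseteq> g"
      proof
        fix e assume e: "e \<in> mu T"
        obtain a b v where ev: "e = (a,b,v)" by (cases e) auto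
        from mu_Node_cases[OF dT[unfolded T_def] e[unfolded ev T_def]]
        show "e \<in> g"
        proof (elim disjE exE conjE)
          fix j assume j: "j < length [TP, TS]" "(a,b,v) \<in> mu ([TP, TS] ! j)"
          then have "(a,b,v) \<in> mu TP \<or> (a,b,v) \<in> mu TS" by (cases j) auto
          then show ?thesis using TP TS ev unfolding rg_def by auto
        next
          fix x y assume xy: "x < y" "y < length [TP, TS]" "a \<in> set (leaves ([TP, TS] ! x))" "b \<in> set (leaves ([TP, TS] ! y))" "v = w"
          then have "x = 0" "y = 1" by auto
          then have "a \<in> P" "b \<in> S" using xy sP sS by auto
          then show ?thesis using cross ev xy by simp
        qed
      qed
    next
      show "g \<subseteq> mu T"
      proof
        fix e assume e: "e \<in> g"
        obtain a b v where ev: "e = (a,b,v)" by (cases e) auto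
        have ab: "a \<in> A" "b \<in> A" "a \<noteq> b" using Gn_edge[OF g e[unfolded ev]] by auto
        consider "a \<in> P" "b \<in> P" | "a \<in> S" "b \<in> S" | "a \<in> P" "b \<in> S" | "a \<in> S" "b \<in> P"
          using ab AU by blast
        then show "e \<in> mu T"
        proof cases
          case 1
          then have "e \<in> mu TP" using TP e ev unfolding rg_def by auto
          then show ?thesis using mu_child[of TP "[TP, TS]" w] unfolding T_def by auto
        next
          case 2
          then have "e \<in> mu TS" using TS e ev unfolding rg_def by auto
          then show ?thesis using mu_child[of TS "[TP, TS]" w] unfolding T_def by auto
        next
          case 3
          have vw: "v = w" using Gn_uniq[OF g e[unfolded ev] cross[OF 3]] by simp
          have "(a,b,w) \<in> mu T"
          proof -
            have h1: "a \<in> set (leaves ([TP,TS]!0))" using 3 sP by simp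
            have h2: "b \<in> set (leaves ([TP,TS]! Suc 0))" using 3 sS by simp
            have "(0::nat) < Suc 0" "Suc 0 < length [TP,TS]" by simp_all
            from mu_cross[OF dT[unfolded T_def] this h1 h2] show ?thesis unfolding T_def .
          qed
          then show ?thesis unfolding ev vw .
        next
          case 4
          have "(b,a) \<in> {(a,b),(b,a)}" by simp
          from Gn_uniq[OF g e[unfolded ev] cross[OF 4(2) 4(1)] this] have "(a,b,v) = (b,a,w)" .
          then have "a = b" by (rule Pair_inject) 
          then show ?thesis using ab(3) by contradiction
        qed
      qed
    qed
    then show ?thesis using Ttr by blast
  qed
qed

theorem mainTheorem17:
  fixes n :: nat and A :: "'a set" and g :: "'a wgraph"
  assumes "n \<ge> 1" and "finite A" and "A \<noteq> {}" and "g \<in> Gn n A"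
  shows "g \<in> mu ` trees n A \<longleftrightarrow> path_condition g"
proof
  assume "g \<in> mu ` trees n A"
  then obtain T where T: "T \<in> trees n A" "g = mu T" by blast
  have "distinct (leaves T)" using T(1) unfolding trees_def by simp
  then show "path_condition g" using pc_mu T(2) by simp
next
  assume "path_condition g"
  then obtain T where "T \<in> trees n A" "mu T = g" using construct assms(2,3,4) by blast
  then show "g \<in> mu ` trees n A" by blast
qed

end
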